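(* Let $\delta>0$. For UCBVI-CH run for $K$ episodes, with probability at least $1-\delta$, simultaneously for all $k\in[K]$, $h\in[H+1]$ and $x\in\mathcal S$, one has $V_{k,h}(x)\ge V^*_h(x)$.
   Context: Setting: a finite-horizon episodic MDP with finite state set $\mathcal S$ ($|\mathcal S|=S$), finite action set $\mathcal A$ ($|\mathcal A|=A$), unknown transitions $P(\cdot\mid x,a)$, known deterministic reward $R:\mathcal S\times\mathcal A\to[0,1]$, horizon $H$; episodes $k=1,\dots,K$ start from arbitrary $x_{k,1}$ and $x_{k,h+1}\sim P(\cdot\mid x_{k,h},a_{k,h})$. $V^*_h(x)=\sup_\pi\mathbb E\big[\sum_{j=h}^HR(x_j,\pi(x_j,j))\mid x_h=x\big]$, $V^*_{H+1}\equiv0$; $T=KH$. UCBVI: before episode $k$, from transitions of episodes $i<k$, $N_k(x,a,y)$ counts transitions $(x,a)\to y$, $N_k(x,a)=\sum_yN_k(x,a,y)$, $\widehat P_k(y\mid x,a)=N_k(x,a,y)/N_k(x,a)$ if $N_k(x,a)>0$. $V_{k,H+1}\equiv0$, $Q_{0,h}\equiv H$; for $h=H,\dots,1$: if $N_k(x,a)>0$, $Q_{k,h}(x,a)=\min\big(Q_{k-1,h}(x,a),H,R(x,a)+\sum_y\widehat P_k(y\mid x,a)V_{k,h+1}(y)+b_{k,h}(x,a)\big)$, else $Q_{k,h}(x,a)=H$; $V_{k,h}(x)=\max_aQ_{k,h}(x,a)$; actions are chosen greedily w.r.t. $Q_{k,h}$. UCBVI-CH uses $b_{k,h}(x,a)=7HL'/\sqrt{N_k(x,a)}$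 with $L'=\ln(5SAT/\delta)$. *)

theory Defs
  imports "HOL-Probability.Probability_Mass_Function"
begin

(* A transition record (x, a, y): in state x, action a was taken, next state was y.
   An episode is the list of its H transitions; a history is the list of episodes so far
   (episode i is the i-th element, i = 1, 2, ...). *)
type_synonym ('s, 'a) trans = "'s \<times> 'a \<times> 's"

definition Ncnt :: "('s, 'a) trans list \<Rightarrow> 's \<Rightarrow> 'a \<Rightarrow> 's \<Rightarrow> nat" where
  "Ncnt D x a y = length (filter (\<lambda>t. t = (x, a, y)) D)"

definition Nsa :: "('s, 'a) trans list \<Rightarrow> 's \<Rightarrow> 'a \<Rightarrow> nat" where
  "Nsa D x a = length (filter (\<lambda>(x', a', y'). x' = x \<and> a' = a) D)"

definition Phat :: "('s, 'a) trans list \<Rightarrow> 's \<Rightarrow> 'a \<Rightarrow> 's \<Rightarrow> real" where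
  "Phat D x a y = real (Ncnt D x a y) / real (Nsa D x a)"

(* One UCBVI backup at step h, given data D, previous-episode Q (Qp) and next-step value V;
   the bonus b is a function of N_k(x,a). *)
definition Qstep :: "('s \<Rightarrow> 'a \<Rightarrow> real) \<Rightarrow> nat \<Rightarrow> (nat \<Rightarrow> real) \<Rightarrow> ('s::finite, 'a) trans list
    \<Rightarrow> (nat \<Rightarrow> 's \<Rightarrow> 'a \<Rightarrow> real) \<Rightarrow> nat \<Rightarrow> ('s \<Rightarrow> real) \<Rightarrow> 's \<Rightarrow> 'a \<Rightarrow> real" where
  "Qstep R H b D Qp h V x a =
     (if Nsa D x a = 0 then real H
      else min (Qp h x a) (min (real H)
             (R x a + (\<Sum>y\<in>UNIV. Phat D x a y * V y) + b (Nsa D x a))))"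

(* Vrem ... j x = V_{k,H+1-j}(x): value with j steps remaining (backward induction). *)
primrec Vrem :: "('s \<Rightarrow> 'a::finite \<Rightarrow> real) \<Rightarrow> nat \<Rightarrow> (nat \<Rightarrow> real) \<Rightarrow> ('s::finite, 'a) trans list
    \<Rightarrow> (nat \<Rightarrow> 's \<Rightarrow> 'a \<Rightarrow> real) \<Rightarrow> nat \<Rightarrow> 's \<Rightarrow> real" where
  "Vrem R H b D Qp 0 x = 0"
| "Vrem R H b D Qp (Suc j) x =
     Max (range (\<lambda>a. Qstep R H b D Qp (H - j) (Vrem R H b D Qp j) x a))"

(* Q_{k,h} computed from data D (episodes < k) and Qp = Q_{k-1,.} *)
definition Qnew :: "('s \<Rightarrow> 'a::finite \<Rightarrow> real) \<Rightarrow> nat \<Rightarrow> (nat \<Rightarrow> real) \<Rightarrow> ('s::finite, 'a) trans list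
    \<Rightarrow> (nat \<Rightarrow> 's \<Rightarrow> 'a \<Rightarrow> real) \<Rightarrow> nat \<Rightarrow> 's \<Rightarrow> 'a \<Rightarrow> real" where
  "Qnew R H b D Qp h x a = Qstep R H b D Qp h (Vrem R H b D Qp (H - h)) x a"

(* Qep ... hist k = Q_{k,.}; Q_{0,h} = H; Q_k uses the transitions of episodes 1..k-1 *)
primrec Qep :: "('s \<Rightarrow> 'a::finite \<Rightarrow> real) \<Rightarrow> nat \<Rightarrow> (nat \<Rightarrow> real) \<Rightarrow> ('s::finite, 'a) trans list list
    \<Rightarrow> nat \<Rightarrow> nat \<Rightarrow> 's \<Rightarrow> 'a \<Rightarrow> real" where
  "Qep R H b hist 0 = (\<lambda>h x a. real H)"
| "Qep R H b hist (Suc k) = Qnew R H b (concat (take k hist)) (Qep R H b hist k)"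

(* V_{k,h}(x) for k \<ge> 1, 1 \<le> h \<le> H+1 *)
definition Vk :: "('s \<Rightarrow> 'a::finite \<Rightarrow> real) \<Rightarrow> nat \<Rightarrow> (nat \<Rightarrow> real) \<Rightarrow> ('s::finite, 'a) trans list list
    \<Rightarrow> nat \<Rightarrow> nat \<Rightarrow> 's \<Rightarrow> real" where
  "Vk R H b hist k h x =
     Vrem R H b (concat (take (k - 1) hist)) (Qep R H b hist (k - 1)) (H + 1 - h) x"

(* Generation of episode k; with Suc j steps remaining the current step is h = H - j:
   the action is chosen greedily w.r.t. Q_{k,h}(x, .) via the tie-breaking rule tb. *)
primrec gen_ep :: "('s \<Rightarrow> 'a \<Rightarrow> 's pmf) \<Rightarrow> nat \<Rightarrow> (nat \<Rightarrow> 's \<Rightarrow> 'a \<Rightarrow> real)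
    \<Rightarrow> (('s, 'a) trans list list \<Rightarrow> nat \<Rightarrow> nat \<Rightarrow> 's \<Rightarrow> ('a \<Rightarrow> real) \<Rightarrow> 'a)
    \<Rightarrow> ('s, 'a) trans list list \<Rightarrow> nat \<Rightarrow> nat \<Rightarrow> 's \<Rightarrow> ('s, 'a) trans list pmf" where
  "gen_ep P H Q tb hist k 0 x = return_pmf []"
| "gen_ep P H Q tb hist k (Suc j) x =
     (let h = H - j; a = tb hist k h x (\<lambda>a. Q h x a) in
      bind_pmf (P x a) (\<lambda>y. map_pmf (\<lambda>rest. (x, a, y) # rest) (gen_ep P H Q tb hist k j y)))"

(* Distribution of the history of the first k episodes of UCBVI with bonus b,
   initial states x1 and greedy tie-breaking rule tb. *)
primrec run :: "('s \<Rightarrow> 'a::finite \<Rightarrow> 's::finite pmf) \<Rightarrow> ('s \<Rightarrow> 'a \<Rightarrow> real) \<Rightarrow> nat \<Rightarrow> (nat \<Rightarrow> real)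
    \<Rightarrow> (nat \<Rightarrow> 's) \<Rightarrow> (('s, 'a) trans list list \<Rightarrow> nat \<Rightarrow> nat \<Rightarrow> 's \<Rightarrow> ('a \<Rightarrow> real) \<Rightarrow> 'a)
    \<Rightarrow> nat \<Rightarrow> ('s, 'a) trans list list pmf" where
  "run P R H b x1 tb 0 = return_pmf []"
| "run P R H b x1 tb (Suc k) =
     bind_pmf (run P R H b x1 tb k) (\<lambda>hist.
       map_pmf (\<lambda>e. hist @ [e])
         (gen_ep P H (Qep R H b hist (Suc k)) tb hist (Suc k) H (x1 (Suc k))))"

(* Value of deterministic policy pol (pol x j = action at state x, step j) with j steps remaining:
   Vpi ... j x = V^pi_{H+1-j}(x). *)
primrec Vpi :: "('s \<Rightarrow> 'a \<Rightarrow> 's pmf) \<Rightarrow> ('s \<Rightarrow> 'a \<Rightarrow> real) \<Rightarrow> nat \<Rightarrow> ('s \<Rightarrow> nat \<Rightarrow> 'a)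
    \<Rightarrow> nat \<Rightarrow> 's \<Rightarrow> real" where
  "Vpi P R H pol 0 x = 0"
| "Vpi P R H pol (Suc j) x =
     (let a = pol x (H - j) in R x a + measure_pmf.expectation (P x a) (Vpi P R H pol j))"

definition Vstar :: "('s \<Rightarrow> 'a \<Rightarrow> 's pmf) \<Rightarrow> ('s \<Rightarrow> 'a \<Rightarrow> real) \<Rightarrow> nat \<Rightarrow> nat \<Rightarrow> 's \<Rightarrow> real" where
  "Vstar P R H h x = (SUP pol. Vpi P R H pol (H + 1 - h) x)"

definition bonusCH :: "nat \<Rightarrow> nat \<Rightarrow> nat \<Rightarrow> nat \<Rightarrow> real \<Rightarrow> nat \<Rightarrow> real" where
  "bonusCH S A H K \<delta> n = 7 * real H * ln (5 * real S * real A * real (K * H) / \<delta>) / sqrt (real n)"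

end

theory Submission
  imports Defs "HOL-Probability.Hoeffding"
begin

primrec phi :: "'s \<Rightarrow> 'a \<Rightarrow> nat \<Rightarrow> ('s \<Rightarrow> real) \<Rightarrow> nat \<Rightarrow> ('s, 'a) trans list \<Rightarrow> real" where
  "phi x0 a0 n g c [] = 1"
| "phi x0 a0 n g c (t # D) =
    (if fst t = x0 \<and> fst (snd t) = a0
     then (if c < n then g (snd (snd t)) else 1) * phi x0 a0 n g (Suc c) D
     else phi x0 a0 n g c D)"

definition SS :: "'s \<Rightarrow> 'a \<Rightarrow> ('s \<Rightarrow> real) \<Rightarrow> ('s, 'a) trans list \<Rightarrow> real" where
  "SS x0 a0 u D = sum_list (map (\<lambda>(x, a, y). if x = x0 \<and> a = a0 then u y else 0) D)"

lemma Nsa_Nil[simp]: "Nsa [] x a = 0" by (simp add: Nsa_def)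
lemma Nsa_Cons[simp]: "Nsa (t # D) x a = (if fst t = x \<and> fst (snd t) = a then Suc (Nsa D x a) else Nsa D x a)"
  by (cases t) (auto simp: Nsa_def)
lemma Nsa_append[simp]: "Nsa (D @ E) x a = Nsa D x a + Nsa E x a" by (simp add: Nsa_def)
lemma Nsa_le_length: "Nsa D x a \<le> length D" unfolding Nsa_def by (rule length_filter_le)

lemma SS_Nil[simp]: "SS x0 a0 u [] = 0" by (simp add: SS_def)
lemma SS_Cons[simp]: "SS x0 a0 u (t # D) = (if fst t = x0 \<and> fst (snd t) = a0 then u (snd (snd t)) else 0) + SS x0 a0 u D"
  by (cases t) (auto simp: SS_def)

lemma phi_append: "phi x0 a0 n g c (D @ E) = phi x0 a0 n g c D * phi x0 a0 n g (c + Nsa D x0 a0) E"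
  by (induction D arbitrary: c) auto

lemma phi_ge: "n \<le> c \<Longrightarrow> phi x0 a0 n g c E = 1"
  by (induction E arbitrary: c) auto

lemma phi_exp: "c + Nsa D x0 a0 \<le> n \<Longrightarrow> phi x0 a0 n (\<lambda>y. exp (u y)) c D = exp (SS x0 a0 u D)"
  by (induction D arbitrary: c) (auto simp: exp_add)

lemma phi_nonneg: "(\<And>y. 0 \<le> g y) \<Longrightarrow> 0 \<le> phi x0 a0 n g c D"
  by (induction D arbitrary: c) auto

lemma SS_lin: "SS x0 a0 (\<lambda>y. \<alpha> - \<beta> * f y) D = real (Nsa D x0 a0) * \<alpha> - \<beta> * SS x0 a0 f D"
  by (induction D) (auto simp: algebra_simps)

lemma Ncnt_Cons: "Ncnt (t # D) x a y = (if t = (x, a, y) then Suc (Ncnt D x a y) else Ncnt D x a y)"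
  by (simp add: Ncnt_def)

lemma sum_Ncnt: "(\<Sum>y\<in>(UNIV::'s::finite set). real (Ncnt D x a y) * f y) = SS x a f (D :: ('s,'a) trans list)"
proof (induction D)
  case Nil then show ?case by (simp add: Ncnt_def)
next
  case (Cons t D)
  obtain x' a' y' where t: "t = (x', a', y')" by (cases t) auto
  have "(\<Sum>y\<in>(UNIV::'s set). real (Ncnt (t # D) x a y) * f y)
      = (\<Sum>y\<in>UNIV. (if t = (x, a, y) then f y else 0)) + (\<Sum>y\<in>UNIV. real (Ncnt D x a y) * f y)"
    by (simp add: Ncnt_Cons sum.distrib[symmetric] algebra_simps, rule sum.cong, auto simp: algebra_simps)
  also have "(\<Sum>y\<in>(UNIV::'s set). (if t = (x, a, y) then f y else 0)) = (if x' = x \<and> a' = a then f y' else 0)"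
    using t by (auto simp: sum.delta')
  finally show ?case using Cons t by simp
qed

lemma sum_Phat: "(\<Sum>y\<in>(UNIV::'s::finite set). Phat D x a y * f y) = SS x a f (D :: ('s,'a) trans list) / real (Nsa D x a)"
proof -
  have "(\<Sum>y\<in>(UNIV::'s set). Phat D x a y * f y) = (\<Sum>y\<in>UNIV. real (Ncnt D x a y) * f y) / real (Nsa D x a)"
    by (simp add: Phat_def sum_divide_distrib)
  then show ?thesis by (simp add: sum_Ncnt)
qed

lemma gen_ep_len: "e \<in> set_pmf (gen_ep P H Q tb hist k j x) \<Longrightarrow> length e = j"
  by (induction j arbitrary: x e) (auto simp: Let_def)

lemma run_len: "hist \<in> set_pmf (run P R H b x1 tb k) \<Longrightarrow> length (concat hist) = k * H"
  by (induction k arbitrary: hist) (auto dest: gen_ep_len)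


lemma hoeff:
  fixes p :: "'s pmf" and f :: "'s \<Rightarrow> real"
  assumes "\<And>y. 0 \<le> f y \<and> f y \<le> C" "l > 0"
  shows "(\<integral>\<^sup>+y. ennreal (exp (l * (measure_pmf.expectation p f - f y) - l\<^sup>2 * C\<^sup>2 / 8)) \<partial>p) \<le> 1"
proof -
  interpret I: interval_bounded_random_variable "measure_pmf p" "\<lambda>y. - f y" "-C" 0
    by unfold_locales (use assms(1) in \<open>auto intro!: AE_pmfI\<close>)
  have h: "(\<integral>\<^sup>+y. ennreal (exp (l * (- f y - measure_pmf.expectation p (\<lambda>y. - f y)))) \<partial>p) \<le> ennreal (exp (l\<^sup>2 * (0 - - C)\<^sup>2 / 8))"
    by (rule I.Hoeffdings_lemma_nn_integral) (use assms in auto)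
  have "(\<integral>\<^sup>+y. ennreal (exp (l * (measure_pmf.expectation p f - f y) - l\<^sup>2 * C\<^sup>2 / 8)) \<partial>p)
      = (\<integral>\<^sup>+y. ennreal (exp (l * (- f y - measure_pmf.expectation p (\<lambda>y. - f y)))) * ennreal (exp (- (l\<^sup>2 * C\<^sup>2 / 8))) \<partial>p)"
    by (intro nn_integral_cong) (simp add: ennreal_mult'[symmetric] exp_add[symmetric] algebra_simps)
  also have "\<dots> = (\<integral>\<^sup>+y. ennreal (exp (l * (- f y - measure_pmf.expectation p (\<lambda>y. - f y)))) \<partial>p) * ennreal (exp (- (l\<^sup>2 * C\<^sup>2 / 8)))"
    by (rule nn_integral_multc) auto
  also have "\<dots> \<le> ennreal (exp (l\<^sup>2 * (0 - - C)\<^sup>2 / 8)) * ennreal (exp (- (l\<^sup>2 * C\<^sup>2 / 8)))"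
    by (intro mult_right_mono h) auto
  also have "\<dots> = 1"
    by (simp add: ennreal_mult'[symmetric] exp_minus field_simps)
  finally show ?thesis .
qed


lemma gen_ep_phi:
  fixes P :: "'s \<Rightarrow> 'a \<Rightarrow> 's pmf"
  assumes g0: "\<And>y. 0 \<le> g y" and gi: "(\<integral>\<^sup>+y. ennreal (g y) \<partial>P x0 a0) \<le> 1"
  shows "(\<integral>\<^sup>+e. ennreal (phi x0 a0 n g c e) \<partial>gen_ep P H Q tb hist k j x) \<le> 1"
proof (induction j arbitrary: c x)
  case 0 then show ?case by simp
next
  case (Suc j)
  define a where "a = tb hist k (H - j) x (Q (H - j) x)"
  have eq: "(\<integral>\<^sup>+e. ennreal (phi x0 a0 n g c e) \<partial>gen_ep P H Q tb hist k (Suc j) x)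
     = (\<integral>\<^sup>+y. (\<integral>\<^sup>+r. ennreal (phi x0 a0 n g c ((x, a, y) # r)) \<partial>gen_ep P H Q tb hist k j y) \<partial>P x a)"
    by (simp add: a_def Let_def)
  show ?case
  proof (cases "x = x0 \<and> a = a0 \<and> c < n")
    case True
    have "(\<integral>\<^sup>+y. (\<integral>\<^sup>+r. ennreal (phi x0 a0 n g c ((x, a, y) # r)) \<partial>gen_ep P H Q tb hist k j y) \<partial>P x a)
       = (\<integral>\<^sup>+y. ennreal (g y) * (\<integral>\<^sup>+r. ennreal (phi x0 a0 n g (Suc c) r) \<partial>gen_ep P H Q tb hist k j y) \<partial>P x a)"
      using True g0 by (intro nn_integral_cong) (simp add: ennreal_mult' nn_integral_cmult[symmetric])
    also have "\<dots> \<le> (\<integral>\<^sup>+y. ennreal (g y) \<partial>P x a)"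
      by (intro nn_integral_mono) (use Suc.IH[where c="Suc c"] in \<open>auto intro: mult_left_le\<close>)
    also have "\<dots> \<le> 1" using True gi by simp
    finally show ?thesis using eq by simp
  next
    case False
    have "(\<integral>\<^sup>+y. (\<integral>\<^sup>+r. ennreal (phi x0 a0 n g c ((x, a, y) # r)) \<partial>gen_ep P H Q tb hist k j y) \<partial>P x a)
       \<le> (\<integral>\<^sup>+y. 1 \<partial>P x a)"
    proof (intro nn_integral_mono)
      fix y
      show "(\<integral>\<^sup>+r. ennreal (phi x0 a0 n g c ((x, a, y) # r)) \<partial>gen_ep P H Q tb hist k j y) \<le> 1"
      proof (cases "x = x0 \<and> a = a0")
        case True
        with False have "\<not> c < n" by simp
        then show ?thesis using True Suc.IH[where c="Suc c" and x=y] by simp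
      next
        case False
        then have "\<And>r. phi x0 a0 n g c ((x, a, y) # r) = phi x0 a0 n g c r" by auto
        then show ?thesis using Suc.IH[where c=c and x=y] by simp
      qed
    qed
    also have "\<dots> = 1" by simp
    finally show ?thesis using eq by simp
  qed
qed

lemma run_phi:
  fixes P :: "'s::finite \<Rightarrow> 'a::finite \<Rightarrow> 's pmf"
  assumes g0: "\<And>y. 0 \<le> g y" and gi: "(\<integral>\<^sup>+y. ennreal (g y) \<partial>P x0 a0) \<le> 1"
  shows "(\<integral>\<^sup>+hist. ennreal (phi x0 a0 n g 0 (concat hist)) \<partial>run P R H b x1 tb k) \<le> 1"
proof (induction k)
  case 0 then show ?case by simp
next
  case (Suc k)
  have "(\<integral>\<^sup>+hist. ennreal (phi x0 a0 n g 0 (concat hist)) \<partial>run P R H b x1 tb (Suc k))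
     = (\<integral>\<^sup>+hist. (\<integral>\<^sup>+e. ennreal (phi x0 a0 n g 0 (concat hist)) * ennreal (phi x0 a0 n g (Nsa (concat hist) x0 a0) e)
          \<partial>gen_ep P H (Qep R H b hist (Suc k)) tb hist (Suc k) H (x1 (Suc k))) \<partial>run P R H b x1 tb k)"
    by (simp add: phi_append ennreal_mult' phi_nonneg g0)
  also have "\<dots> \<le> (\<integral>\<^sup>+hist. ennreal (phi x0 a0 n g 0 (concat hist)) \<partial>run P R H b x1 tb k)"
  proof (intro nn_integral_mono)
    fix hist
    have "(\<integral>\<^sup>+e. ennreal (phi x0 a0 n g 0 (concat hist)) * ennreal (phi x0 a0 n g (Nsa (concat hist) x0 a0) e)
          \<partial>gen_ep P H (Qep R H b hist (Suc k)) tb hist (Suc k) H (x1 (Suc k)))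
        = ennreal (phi x0 a0 n g 0 (concat hist)) * (\<integral>\<^sup>+e. ennreal (phi x0 a0 n g (Nsa (concat hist) x0 a0) e)
          \<partial>gen_ep P H (Qep R H b hist (Suc k)) tb hist (Suc k) H (x1 (Suc k)))"
      by (rule nn_integral_cmult) auto
    also have "\<dots> \<le> ennreal (phi x0 a0 n g 0 (concat hist))"
      using gen_ep_phi[of g P x0 a0, OF g0 gi] by (auto intro: mult_left_le)
    finally show "(\<integral>\<^sup>+e. ennreal (phi x0 a0 n g 0 (concat hist)) * ennreal (phi x0 a0 n g (Nsa (concat hist) x0 a0) e)
          \<partial>gen_ep P H (Qep R H b hist (Suc k)) tb hist (Suc k) H (x1 (Suc k))) \<le> ennreal (phi x0 a0 n g 0 (concat hist))" .
  qed
  finally show ?case using Suc.IH by simp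
qed

lemma markov_phi:
  fixes M :: "'h pmf"
  assumes "\<And>h. 0 \<le> F h" "(\<integral>\<^sup>+h. ennreal (F h) \<partial>M) \<le> 1"
  shows "measure_pmf.prob M {h. exp s \<le> F h} \<le> exp (- s)"
proof -
  have "emeasure (measure_pmf M) {h \<in> UNIV. 1 \<le> ennreal (exp (-s)) * ennreal (F h)}
       \<le> ennreal (exp (-s)) * (\<integral>\<^sup>+h. ennreal (F h) * indicator UNIV h \<partial>M)"
    by (rule nn_integral_Markov_inequality) auto
  also have "\<dots> \<le> ennreal (exp (-s))"
    using assms(2) by (auto intro: mult_left_le)
  finally have 1: "emeasure (measure_pmf M) {h \<in> UNIV. 1 \<le> ennreal (exp (-s)) * ennreal (F h)} \<le> ennreal (exp (-s))" .
  have "{h. exp s \<le> F h} \<subseteq> {h \<in> UNIV. 1 \<le> ennreal (exp (-s)) * ennreal (F h)}"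
  proof
    fix h assume "h \<in> {h. exp s \<le> F h}"
    then have "1 \<le> exp (-s) * F h" by (simp add: exp_minus field_simps)
    then show "h \<in> {h \<in> UNIV. 1 \<le> ennreal (exp (-s)) * ennreal (F h)}"
      by (simp add: ennreal_mult'[symmetric] ennreal_1[symmetric] del: ennreal_1)
  qed
  then have "emeasure (measure_pmf M) {h. exp s \<le> F h} \<le> ennreal (exp (-s))"
    by (rule order_trans[OF emeasure_mono 1]) auto
  then show ?thesis by (simp add: measure_pmf.emeasure_eq_measure)
qed


lemma exp_sum: "measure_pmf.expectation (p :: 's::finite pmf) (f :: 's \<Rightarrow> real) = (\<Sum>y\<in>UNIV. f y * pmf p y)"
  by (rule integral_measure_pmf_real) auto

lemma exp_le_const: "(\<And>y. f y \<le> c) \<Longrightarrow> measure_pmf.expectation (p :: 's::finite pmf) (f :: 's \<Rightarrow> real) \<le> c"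
proof -
  assume "\<And>y. f y \<le> c"
  then have "(\<Sum>y\<in>UNIV. f y * pmf p y) \<le> (\<Sum>y\<in>UNIV. c * pmf p y)"
    by (intro sum_mono mult_right_mono) auto
  also have "\<dots> = c" by (simp add: sum_distrib_left[symmetric] sum_pmf_eq_1)
  finally show ?thesis by (simp add: exp_sum)
qed

lemma exp_ge_const: "(\<And>y. c \<le> f y) \<Longrightarrow> c \<le> measure_pmf.expectation (p :: 's::finite pmf) (f :: 's \<Rightarrow> real)"
proof -
  assume "\<And>y. c \<le> f y"
  then have "(\<Sum>y\<in>UNIV. c * pmf p y) \<le> (\<Sum>y\<in>UNIV. f y * pmf p y)"
    by (intro sum_mono mult_right_mono) auto
  moreover have "(\<Sum>y\<in>UNIV. c * pmf p y) = c" by (simp add: sum_distrib_left[symmetric] sum_pmf_eq_1)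
  ultimately show ?thesis by (simp add: exp_sum)
qed

lemma exp_mono: "(\<And>y. f y \<le> g y) \<Longrightarrow> measure_pmf.expectation (p :: 's::finite pmf) (f :: 's \<Rightarrow> real) \<le> measure_pmf.expectation p g"
  unfolding exp_sum by (intro sum_mono mult_right_mono) auto

lemma Vpi_bounds:
  fixes P :: "'s::finite \<Rightarrow> 'a \<Rightarrow> 's pmf"
  assumes R: "\<forall>x a. 0 \<le> R x a \<and> R x a \<le> 1"
  shows "0 \<le> Vpi P R H pol j x \<and> Vpi P R H pol j x \<le> real j"
proof (induction j arbitrary: x)
  case 0 then show ?case by simp
next
  case (Suc j)
  have e1: "measure_pmf.expectation (P x (pol x (H - j))) (Vpi P R H pol j) \<le> real j"
    by (rule exp_le_const) (use Suc.IH in auto)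
  have e2: "0 \<le> measure_pmf.expectation (P x (pol x (H - j))) (Vpi P R H pol j)"
    by (rule exp_ge_const) (use Suc.IH in auto)
  show ?case using e1 e2 R[rule_format, of x "pol x (H - j)"] by (simp add: Let_def)
qed

lemma bdd_Vpi:
  fixes P :: "'s::finite \<Rightarrow> 'a \<Rightarrow> 's pmf"
  assumes R: "\<forall>x a. 0 \<le> R x a \<and> R x a \<le> 1"
  shows "bdd_above (range (\<lambda>pol. Vpi P R H pol j x))"
  by (rule bdd_aboveI2[where M="real j"]) (use Vpi_bounds[OF R] in auto)

lemma Vstar_bounds:
  fixes P :: "'s::finite \<Rightarrow> 'a \<Rightarrow> 's pmf"
  assumes R: "\<forall>x a. 0 \<le> R x a \<and> R x a \<le> 1"
  shows "0 \<le> Vstar P R H h x \<and> Vstar P R H h x \<le> real (H + 1 - h)"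
proof
  show "0 \<le> Vstar P R H h x" unfolding Vstar_def
    by (rule cSUP_upper2[where x=undefined]) (use Vpi_bounds[OF R] bdd_Vpi[OF R] in auto)
  show "Vstar P R H h x \<le> real (H + 1 - h)" unfolding Vstar_def
    using Vpi_bounds[OF R] by (intro cSUP_least) auto
qed

lemma Vstar_le:
  fixes P :: "'s::finite \<Rightarrow> 'a \<Rightarrow> 's pmf"
  assumes R: "\<forall>x a. 0 \<le> R x a \<and> R x a \<le> 1" and h: "h \<le> H"
  shows "Vstar P R H (Suc h) y \<le> real H - real h"
proof -
  have "Vstar P R H (Suc h) y \<le> real (H + 1 - Suc h)" using Vstar_bounds[OF R, where h="Suc h" and x=y and P=P and H=H] by (rule conjunct2)
  also have "real (H + 1 - Suc h) = real H - real h" using h by (simp add: of_nat_diff)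
  finally show ?thesis .
qed

lemma Vstar_end: "Vstar P R H (H + 1) x = 0" "Vstar P R H (Suc H) x = 0"
  by (simp_all add: Vstar_def)

lemma Vpi_le_Vstar:
  fixes P :: "'s::finite \<Rightarrow> 'a \<Rightarrow> 's pmf"
  assumes R: "\<forall>x a. 0 \<le> R x a \<and> R x a \<le> 1"
  shows "Vpi P R H pol (H + 1 - h) x \<le> Vstar P R H h x"
  unfolding Vstar_def by (rule cSUP_upper) (auto intro: bdd_Vpi[OF R])

lemma bellman:
  fixes P :: "'s::finite \<Rightarrow> 'a::finite \<Rightarrow> 's pmf"
  assumes R: "\<forall>x a. 0 \<le> R x a \<and> R x a \<le> 1" and h: "1 \<le> h" "h \<le> H"
  shows "Vstar P R H h x \<le> Max (range (\<lambda>a. R x a + measure_pmf.expectation (P x a) (Vstar P R H (Suc h))))"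
proof -
  have B: "Vpi P R H pol (H + 1 - h) x \<le> Max (range (\<lambda>a. R x a + measure_pmf.expectation (P x a) (Vstar P R H (Suc h))))" for pol
  proof -
  have eq: "H + 1 - h = Suc (H - h)" "H - (H - h) = h" using h by auto
  have "Vpi P R H pol (H + 1 - h) x = Vpi P R H pol (Suc (H - h)) x" using eq(1) by simp
  also have "\<dots> = R x (pol x h) + measure_pmf.expectation (P x (pol x h)) (Vpi P R H pol (H - h))"
    by (simp only: Vpi.simps Let_def eq(2))
  also have "\<dots> \<le> R x (pol x h) + measure_pmf.expectation (P x (pol x h)) (Vstar P R H (Suc h))"
    using Vpi_le_Vstar[OF R, where pol=pol and h="Suc h"] by (intro add_left_mono exp_mono) simp
  also have "\<dots> \<le> Max (range (\<lambda>a. R x a + measure_pmf.expectation (P x a) (Vstar P R H (Suc h))))"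
    by (rule Max_ge) auto
  finally show ?thesis .
  qed
  show ?thesis unfolding Vstar_def[of P R H h x] by (rule cSUP_least) (use B in auto)
qed

definition goodD :: "('s::finite \<Rightarrow> 'a \<Rightarrow> 's pmf) \<Rightarrow> ('s \<Rightarrow> 'a \<Rightarrow> real) \<Rightarrow> nat \<Rightarrow> (nat \<Rightarrow> real) \<Rightarrow> ('s, 'a) trans list \<Rightarrow> bool" where
  "goodD P R H b D = (\<forall>x a h. 1 \<le> h \<longrightarrow> h \<le> H \<longrightarrow> 0 < Nsa D x a \<longrightarrow>
     measure_pmf.expectation (P x a) (Vstar P R H (Suc h)) - b (Nsa D x a)
       \<le> (\<Sum>y\<in>UNIV. Phat D x a y * Vstar P R H (Suc h) y))"

lemma Qstep_opt:
  fixes P :: "'s::finite \<Rightarrow> 'a::finite \<Rightarrow> 's pmf"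
  assumes R: "\<forall>x a. 0 \<le> R x a \<and> R x a \<le> 1" and h: "1 \<le> h" "h \<le> H"
    and g: "goodD P R H b D"
    and Qp: "R x a + measure_pmf.expectation (P x a) (Vstar P R H (Suc h)) \<le> Qp h x a"
    and V: "\<And>y. Vstar P R H (Suc h) y \<le> V y"
  shows "R x a + measure_pmf.expectation (P x a) (Vstar P R H (Suc h)) \<le> Qstep R H b D Qp h V x a"
proof -
  let ?Q = "R x a + measure_pmf.expectation (P x a) (Vstar P R H (Suc h))"
  have "measure_pmf.expectation (P x a) (Vstar P R H (Suc h)) \<le> real (H - h)"
    by (rule exp_le_const) (use Vstar_le[OF R] h in simp)
  moreover have "R x a \<le> 1" using R by blast
  moreover have "1 + real (H - h) \<le> real H" using h by (simp add: of_nat_diff)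
  ultimately have QH: "?Q \<le> real H" by linarith
  show ?thesis
  proof (cases "Nsa D x a = 0")
    case True then show ?thesis using QH by (simp add: Qstep_def)
  next
    case False
    have "measure_pmf.expectation (P x a) (Vstar P R H (Suc h)) - b (Nsa D x a)
       \<le> (\<Sum>y\<in>UNIV. Phat D x a y * Vstar P R H (Suc h) y)"
      using g h False unfolding goodD_def by auto
    also have "\<dots> \<le> (\<Sum>y\<in>UNIV. Phat D x a y * V y)"
      by (intro sum_mono mult_left_mono V) (simp add: Phat_def)
    finally have "?Q \<le> R x a + (\<Sum>y\<in>UNIV. Phat D x a y * V y) + b (Nsa D x a)" by simp
    then show ?thesis using False QH Qp by (simp add: Qstep_def)
  qed
qed

lemma Vrem_opt:
  fixes P :: "'s::finite \<Rightarrow> 'a::finite \<Rightarrow> 's pmf"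
  assumes R: "\<forall>x a. 0 \<le> R x a \<and> R x a \<le> 1"
    and g: "goodD P R H b D"
    and Qp: "\<And>h x a. 1 \<le> h \<Longrightarrow> h \<le> H \<Longrightarrow> R x a + measure_pmf.expectation (P x a) (Vstar P R H (Suc h)) \<le> Qp h x a"
  shows "j \<le> H \<Longrightarrow> Vstar P R H (H + 1 - j) x \<le> Vrem R H b D Qp j x"
proof (induction j arbitrary: x)
  case 0 then show ?case by (simp add: Vstar_end)
next
  case (Suc j)
  have h: "1 \<le> H - j" "H - j \<le> H" using Suc.prems by auto
  have e: "H + 1 - Suc j = H - j" "Suc (H - j) = H + 1 - j" using Suc.prems by auto
  have "Vstar P R H (H + 1 - Suc j) x \<le> Max (range (\<lambda>a. R x a + measure_pmf.expectation (P x a) (Vstar P R H (Suc (H - j)))))"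
    unfolding e(1) by (rule bellman[OF R h])
  also have "\<dots> \<le> Vrem R H b D Qp (Suc j) x"
    unfolding Vrem.simps
  proof (rule Max.boundedI)
    show "finite (range (\<lambda>a. R x a + measure_pmf.expectation (P x a) (Vstar P R H (Suc (H - j)))))" by simp
    show "range (\<lambda>a. R x a + measure_pmf.expectation (P x a) (Vstar P R H (Suc (H - j)))) \<noteq> {}" by simp
    fix v assume "v \<in> range (\<lambda>a. R x a + measure_pmf.expectation (P x a) (Vstar P R H (Suc (H - j))))"
    then obtain a where v: "v = R x a + measure_pmf.expectation (P x a) (Vstar P R H (Suc (H - j)))" by auto
    have "v \<le> Qstep R H b D Qp (H - j) (Vrem R H b D Qp j) x a"
      unfolding v
      by (rule Qstep_opt[where h="H - j" and D=D and Qp=Qp and V="Vrem R H b D Qp j", OF R h g Qp[OF h]]) (use Suc.IH Suc.prems e(2) in auto)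
    also have "\<dots> \<le> Max (range (\<lambda>a. Qstep R H b D Qp (H - j) (Vrem R H b D Qp j) x a))"
      by (rule Max_ge) auto
    finally show "v \<le> Max (range (\<lambda>a. Qstep R H b D Qp (H - j) (Vrem R H b D Qp j) x a))" .
  qed
  finally show ?case .
qed

lemma Qep_opt:
  fixes P :: "'s::finite \<Rightarrow> 'a::finite \<Rightarrow> 's pmf"
  assumes R: "\<forall>x a. 0 \<le> R x a \<and> R x a \<le> 1"
  shows "(\<forall>i<k. goodD P R H b (concat (take i hist))) \<Longrightarrow> 1 \<le> h \<Longrightarrow> h \<le> H \<Longrightarrow>
     R x a + measure_pmf.expectation (P x a) (Vstar P R H (Suc h)) \<le> Qep R H b hist k h x a"
proof (induction k arbitrary: h x a)
  case 0
  have "measure_pmf.expectation (P x a) (Vstar P R H (Suc h)) \<le> real (H - h)"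
    by (rule exp_le_const) (use Vstar_le[OF R] 0 in simp)
  moreover have "R x a \<le> 1" using R by blast
  moreover have "1 + real (H - h) \<le> real H" using 0 by (simp add: of_nat_diff)
  ultimately show ?case by simp
next
  case (Suc k)
  have g: "goodD P R H b (concat (take k hist))" using Suc.prems by auto
  have IH: "\<And>h x a. 1 \<le> h \<Longrightarrow> h \<le> H \<Longrightarrow> R x a + measure_pmf.expectation (P x a) (Vstar P R H (Suc h)) \<le> Qep R H b hist k h x a"
    using Suc.IH Suc.prems by auto
  show ?case unfolding Qep.simps Qnew_def
  proof (rule Qstep_opt[where h=h and D="concat (take k hist)" and Qp="Qep R H b hist k" and V="Vrem R H b (concat (take k hist)) (Qep R H b hist k) (H - h)", OF R Suc.prems(2,3) g IH[OF Suc.prems(2,3)]])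
    fix y
    have "Vstar P R H (H + 1 - (H - h)) y \<le> Vrem R H b (concat (take k hist)) (Qep R H b hist k) (H - h) y"
      by (rule Vrem_opt[OF R g IH]) auto
    moreover have "H + 1 - (H - h) = Suc h" using Suc.prems by auto
    ultimately show "Vstar P R H (Suc h) y \<le> Vrem R H b (concat (take k hist)) (Qep R H b hist k) (H - h) y" by simp
  qed
qed

lemma det_opt:
  fixes P :: "'s::finite \<Rightarrow> 'a::finite \<Rightarrow> 's pmf"
  assumes R: "\<forall>x a. 0 \<le> R x a \<and> R x a \<le> 1"
    and G: "\<forall>i<K. goodD P R H b (concat (take i hist))"
    and k: "k \<in> {1..K}" and h: "h \<in> {1..H+1}"
  shows "Vk R H b hist k h x \<ge> Vstar P R H h x"
proof -
  have g: "goodD P R H b (concat (take (k - 1) hist))" using G k by auto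
  have Qp: "\<And>h x a. 1 \<le> h \<Longrightarrow> h \<le> H \<Longrightarrow> R x a + measure_pmf.expectation (P x a) (Vstar P R H (Suc h)) \<le> Qep R H b hist (k - 1) h x a"
    by (rule Qep_opt[OF R]) (use G k in auto)
  have "Vstar P R H (H + 1 - (H + 1 - h)) x \<le> Vrem R H b (concat (take (k - 1) hist)) (Qep R H b hist (k - 1)) (H + 1 - h) x"
    by (rule Vrem_opt[OF R g Qp]) (use h in auto)
  moreover have "H + 1 - (H + 1 - h) = h" using h by auto
  ultimately show ?thesis by (simp add: Vk_def)
qed


lemma alg98:
  fixes N H L :: real
  assumes "N > 0" "H > 0"
  shows "N * (4 * (7 * H * L / sqrt N) / H\<^sup>2) * (7 * H * L / sqrt N)
       - N * (4 * (7 * H * L / sqrt N) / H\<^sup>2)\<^sup>2 * H\<^sup>2 / 8 = 98 * L\<^sup>2"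
proof -
  have s: "sqrt N ^ 2 = N" using assms by simp
  have "sqrt N > 0" using assms by simp
  then show ?thesis using assms s by (simp add: field_simps power2_eq_square)
qed

lemma bad_subset:
  fixes P :: "'s::finite \<Rightarrow> 'a::finite \<Rightarrow> 's pmf"
  assumes R: "\<forall>x a. 0 \<le> R x a \<and> R x a \<le> 1" and H: "H \<ge> 1"
    and hs: "hist \<in> set_pmf (run P R H b x1 tb K)"
    and bdef: "\<And>n. b n = 7 * real H * L / sqrt (real n)" and L0: "L \<ge> 0"
    and notG: "\<not> (\<forall>i<K. goodD P R H b (concat (take i hist)))"
  shows "\<exists>x a h n. h \<in> {1..H} \<and> n \<in> {1..K*H} \<and>
     exp (98 * L\<^sup>2) \<le> phi x a n (\<lambda>y. exp ((4 * b n / (real H)\<^sup>2) * (measure_pmf.expectation (P x a) (Vstar P R H (Suc h)) - Vstar P R H (Suc h) y) - (4 * b n / (real H)\<^sup>2)\<^sup>2 * (real H)\<^sup>2 / 8)) 0 (concat hist)"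
proof -
  obtain i x a h where i: "i < K" and h: "1 \<le> h" "h \<le> H" and N0: "0 < Nsa (concat (take i hist)) x a"
    and bad: "\<not> (measure_pmf.expectation (P x a) (Vstar P R H (Suc h)) - b (Nsa (concat (take i hist)) x a)
       \<le> (\<Sum>y\<in>UNIV. Phat (concat (take i hist)) x a y * Vstar P R H (Suc h) y))"
    using notG unfolding goodD_def by blast
  define D where "D = concat (take i hist)"
  define E where "E = concat (drop i hist)"
  define n where "n = Nsa D x a"
  define f where "f = Vstar P R H (Suc h)"
  define Ef where "Ef = measure_pmf.expectation (P x a) f"
  define l where "l = 4 * b n / (real H)\<^sup>2"
  have DE: "concat hist = D @ E" unfolding D_def E_def by (simp flip: concat_append)
  have n0: "n > 0" using N0 by (simp add: n_def D_def)
  have nle: "n \<le> K * H"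
  proof -
    have "n \<le> length D" unfolding n_def by (rule Nsa_le_length)
    also have "\<dots> \<le> length (concat hist)" using DE by simp
    also have "\<dots> = K * H" by (rule run_len[OF hs])
    finally show ?thesis .
  qed
  have badD: "SS x a f D / real n < Ef - b n"
    using bad by (simp add: sum_Phat D_def n_def f_def Ef_def)
  then have SSf: "SS x a f D < real n * (Ef - b n)"
    using n0 by (simp add: divide_less_eq mult.commute)
  have u: "(\<lambda>y. l * (Ef - f y) - l\<^sup>2 * (real H)\<^sup>2 / 8) = (\<lambda>y. (l * Ef - l\<^sup>2 * (real H)\<^sup>2 / 8) - l * f y)"
    by (auto simp: algebra_simps)
  have "phi x a n (\<lambda>y. exp (l * (Ef - f y) - l\<^sup>2 * (real H)\<^sup>2 / 8)) 0 (concat hist)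
      = phi x a n (\<lambda>y. exp (l * (Ef - f y) - l\<^sup>2 * (real H)\<^sup>2 / 8)) 0 D"
    unfolding DE phi_append by (simp add: phi_ge n_def)
  also have "\<dots> = exp (SS x a (\<lambda>y. l * (Ef - f y) - l\<^sup>2 * (real H)\<^sup>2 / 8) D)"
    by (rule phi_exp) (simp add: n_def)
  also have "SS x a (\<lambda>y. l * (Ef - f y) - l\<^sup>2 * (real H)\<^sup>2 / 8) D
      = real n * (l * Ef - l\<^sup>2 * (real H)\<^sup>2 / 8) - l * SS x a f D"
    unfolding u SS_lin n_def ..
  finally have phiEq: "phi x a n (\<lambda>y. exp (l * (Ef - f y) - l\<^sup>2 * (real H)\<^sup>2 / 8)) 0 (concat hist)
      = exp (real n * (l * Ef - l\<^sup>2 * (real H)\<^sup>2 / 8) - l * SS x a f D)" .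
  have Hp: "real H > 0" using H by simp
  have "l * SS x a f D \<le> l * (real n * (Ef - b n))"
  proof (rule mult_left_mono)
    show "SS x a f D \<le> real n * (Ef - b n)" using SSf by simp
    show "0 \<le> l" unfolding l_def bdef using L0 by simp
  qed
  then have "real n * l * b n - real n * l\<^sup>2 * (real H)\<^sup>2 / 8 \<le> real n * (l * Ef - l\<^sup>2 * (real H)\<^sup>2 / 8) - l * SS x a f D"
    by (simp add: algebra_simps)
  moreover have "real n * l * b n - real n * l\<^sup>2 * (real H)\<^sup>2 / 8 = 98 * L\<^sup>2"
    unfolding l_def bdef using alg98[of "real n" "real H" L] n0 Hp by simp
  ultimately have "exp (98 * L\<^sup>2) \<le> phi x a n (\<lambda>y. exp (l * (Ef - f y) - l\<^sup>2 * (real H)\<^sup>2 / 8)) 0 (concat hist)"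
    unfolding phiEq by simp
  then show ?thesis using h n0 nle unfolding l_def Ef_def f_def
    by (intro exI[of _ x] exI[of _ a] exI[of _ h] exI[of _ n]) auto
qed


lemma final_arith:
  fixes S A H K :: nat and \<delta> L X :: real
  assumes "S \<ge> 1" "A \<ge> 1" "H \<ge> 1" "K \<ge> 1" "0 < \<delta>" "\<delta> < 1"
    and X: "X = 5 * real S * real A * real (K * H) / \<delta>" and L: "L = ln X" and L1: "L \<ge> 1"
  shows "real (S * A * H * (K * H)) * exp (- (98 * L\<^sup>2)) \<le> \<delta>"
proof -
  define T where "T = real (K * H)"
  define u where "u = real S * real A"
  have "H \<le> K * H" using assms(4) by simp
  then have T1: "T \<ge> real H" unfolding T_def by linarith
  have Hp: "real H \<ge> 1" using assms by simp
  have "1 \<le> S * A" using assms(1,2) by simp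
  then have "(1::real) \<le> real (S * A)" by linarith
  then have u1: "u \<ge> 1" unfolding u_def by simp
  have Xu: "X = 5 * u * T / \<delta>" by (simp add: X u_def T_def)
  have Xp: "X > 0" using u1 T1 Hp assms(5) by (simp add: Xu)
  have LL: "L * 1 \<le> L * L" using L1 by (intro mult_left_mono) auto
  have l2: "2 * L \<le> 98 * L\<^sup>2" using LL L1 unfolding power2_eq_square by linarith
  have eL: "exp L = X" using Xp L by simp
  have e2: "exp (2 * L) = X * X" by (simp only: mult_2 exp_add eL)
  have e3: "exp (- (2 * L)) = 1 / (X * X)" by (simp only: exp_minus e2 inverse_eq_divide)
  have "exp (- (98 * L\<^sup>2)) \<le> exp (- (2 * L))" by (subst exp_le_cancel_iff) (use l2 in linarith)
  also have "\<dots> = 1 / (X * X)" by (rule e3)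
  finally have e: "exp (- (98 * L\<^sup>2)) \<le> 1 / (X * X)" .
  have c: "real (S * A * H * (K * H)) = u * real H * T" by (simp add: T_def u_def)
  have s1: "u * real H * T \<le> u * T * T"
    using T1 u1 Hp by (intro mult_right_mono mult_left_mono) auto
  have s2: "u * T * T \<le> 25 * (u * T * (u * T))"
  proof -
    have uu: "u * 1 \<le> u * u" using u1 by (intro mult_left_mono) auto
    have a1: "u * (T * T) \<le> (u * u) * (T * T)"
      using uu by (intro mult_right_mono) auto
    have a2: "0 \<le> (u * u) * (T * T)" by simp
    from a1 a2 have "u * (T * T) \<le> 25 * ((u * u) * (T * T))" by linarith
    then show ?thesis by (simp only: mult.assoc mult.left_commute)
  qed
  have s3: "25 * (u * T * (u * T)) \<le> 25 * (u * T * (u * T)) / \<delta>"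
    using assms(5,6) u1 T1 Hp by (simp add: le_divide_eq)
  have s4: "25 * (u * T * (u * T)) / \<delta> = \<delta> * (X * X)"
    using assms(5) unfolding Xu by (simp add: field_simps)
  have 1: "real (S * A * H * (K * H)) \<le> \<delta> * (X * X)"
    using c s1 s2 s3 s4 by linarith
  have "real (S * A * H * (K * H)) * exp (- (98 * L\<^sup>2)) \<le> real (S * A * H * (K * H)) * (1 / (X * X))"
    by (intro mult_left_mono e) simp
  also have "\<dots> \<le> \<delta> * (X * X) * (1 / (X * X))" by (intro mult_right_mono 1) simp
  also have "\<dots> = \<delta>" using Xp by simp
  finally show ?thesis .
qed


theorem mainTheorem3:
  fixes P :: "'s::finite \<Rightarrow> 'a::finite \<Rightarrow> 's pmf"
    and R :: "'s \<Rightarrow> 'a \<Rightarrow> real"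
    and H K :: nat and \<delta> :: real
    and x1 :: "nat \<Rightarrow> 's"
    and tb :: "('s, 'a) trans list list \<Rightarrow> nat \<Rightarrow> nat \<Rightarrow> 's \<Rightarrow> ('a \<Rightarrow> real) \<Rightarrow> 'a"
  assumes "\<delta> > 0"
    and "H \<ge> 1"
    and "\<And>x a. 0 \<le> R x a \<and> R x a \<le> 1"
    and greedy: "\<And>hist k h x f a. f a \<le> f (tb hist k h x f)"
  shows "measure_pmf.prob
           (run P R H (bonusCH CARD('s) CARD('a) H K \<delta>) x1 tb K)
           {hist. \<forall>k\<in>{1..K}. \<forall>h\<in>{1..H+1}. \<forall>x.
              Vk R H (bonusCH CARD('s) CARD('a) H K \<delta>) hist k h x \<ge> Vstar P R H h x}
         \<ge> 1 - \<delta>"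
proof -
  let ?b = "bonusCH CARD('s) CARD('a) H K \<delta>"
  let ?M = "run P R H ?b x1 tb K"
  let ?T = "{hist. \<forall>k\<in>{1..K}. \<forall>h\<in>{1..H+1}. \<forall>x. Vk R H ?b hist k h x \<ge> Vstar P R H h x}"
  have R: "\<forall>x a. 0 \<le> R x a \<and> R x a \<le> 1" using assms(3) by auto
  show ?thesis
  proof (cases "1 \<le> \<delta> \<or> K = 0")
    case True
    then show ?thesis
    proof
      assume "1 \<le> \<delta>"
      moreover have "0 \<le> measure_pmf.prob ?M ?T" by simp
      ultimately show ?thesis by linarith
    next
      assume "K = 0"
      then have "?T = UNIV" by auto
      then show ?thesis using assms(1) by simp
    qed
  next
    case False
    then have d1: "\<delta> < 1" and K1: "K \<ge> 1" by auto
    define X where "X = 5 * real CARD('s) * real CARD('a) * real (K * H) / \<delta>"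
    define L where "L = ln X"
    have prod1: "real CARD('s) * real CARD('a) * real (K * H) \<ge> 1"
    proof -
      have "0 < CARD('s) * CARD('a) * (K * H)" using K1 assms(2) by simp
      then have "1 \<le> CARD('s) * CARD('a) * (K * H)" by linarith
      then have "(1::real) \<le> real (CARD('s) * CARD('a) * (K * H))" by linarith
      then show ?thesis by simp
    qed
    have X5: "X \<ge> 5"
    proof -
      have "5 \<le> 5 * (real CARD('s) * real CARD('a) * real (K * H))" using prod1 by simp
      also have "\<dots> \<le> 5 * (real CARD('s) * real CARD('a) * real (K * H)) / \<delta>"
        using assms(1) d1 prod1 by (simp add: le_divide_eq mult_left_le)
      finally show ?thesis by (simp add: X_def mult.assoc)
    qed
    have L1: "L \<ge> 1"
    proof -
      have "exp 1 \<le> X" using exp_le X5 by linarith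
      then have "ln (exp 1) \<le> ln X" using X5 by (subst ln_le_cancel_iff) auto
      then show ?thesis by (simp add: L_def)
    qed
    have bdef: "\<And>n. ?b n = 7 * real H * L / sqrt (real n)"
      by (simp add: bonusCH_def L_def X_def)
    define gg where "gg = (\<lambda>x a h n y. exp ((4 * ?b n / (real H)\<^sup>2) * (measure_pmf.expectation (P x a) (Vstar P R H (Suc h)) - Vstar P R H (Suc h) y) - (4 * ?b n / (real H)\<^sup>2)\<^sup>2 * (real H)\<^sup>2 / 8))"
    define I where "I = (UNIV :: 's set) \<times> (UNIV :: 'a set) \<times> {1..H} \<times> {1..K*H}"
    define Bs where "Bs = (\<lambda>(x, a, h, n). {hist. exp (98 * L\<^sup>2) \<le> phi x a n (gg x a h n) 0 (concat hist)})"
    define G where "G = {hist. \<forall>i<K. goodD P R H ?b (concat (take i hist))}"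
    have PB: "measure_pmf.prob ?M (Bs i) \<le> exp (- (98 * L\<^sup>2))" if "i \<in> I" for i
    proof -
      obtain x a h n where i: "i = (x, a, h, n)" by (cases i) auto
      have h: "h \<in> {1..H}" and n: "n \<in> {1..K*H}" using that unfolding I_def i by auto
      have g0: "\<And>y. 0 \<le> gg x a h n y" by (simp add: gg_def)
      have lpos: "4 * ?b n / (real H)\<^sup>2 > 0"
        using L1 assms(2) n by (simp add: bdef)
      have gi: "(\<integral>\<^sup>+y. ennreal (gg x a h n y) \<partial>P x a) \<le> 1"
        unfolding gg_def
      proof (rule hoeff[OF _ lpos])
        fix y
        show "0 \<le> Vstar P R H (Suc h) y \<and> Vstar P R H (Suc h) y \<le> real H"
          using Vstar_bounds[OF R, where h="Suc h" and x=y and P=P and H=H] by auto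
      qed
      show ?thesis unfolding i Bs_def
        by (simp, rule markov_phi[OF phi_nonneg[OF g0] run_phi[of "gg x a h n" P x a, OF g0 gi]])
    qed
    have sub: "(UNIV - G) \<inter> set_pmf ?M \<subseteq> (\<Union>i\<in>I. Bs i)"
    proof
      fix hist assume "hist \<in> (UNIV - G) \<inter> set_pmf ?M"
      then have hs: "hist \<in> set_pmf ?M" and nG: "\<not> (\<forall>i<K. goodD P R H ?b (concat (take i hist)))"
        by (auto simp: G_def)
      obtain x a h n where "h \<in> {1..H}" "n \<in> {1..K*H}"
        "exp (98 * L\<^sup>2) \<le> phi x a n (gg x a h n) 0 (concat hist)"
        using bad_subset[OF R assms(2) hs bdef _ nG] L1 unfolding gg_def by fastforce
      then show "hist \<in> (\<Union>i\<in>I. Bs i)" unfolding I_def Bs_def by (intro UN_I[of "(x, a, h, n)"]) auto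
    qed
    have "measure_pmf.prob ?M (UNIV - G) = measure_pmf.prob ?M ((UNIV - G) \<inter> set_pmf ?M)"
      by (simp add: measure_Int_set_pmf)
    also have "\<dots> \<le> measure_pmf.prob ?M (\<Union>i\<in>I. Bs i)"
      by (rule measure_pmf.finite_measure_mono[OF sub]) simp
    also have "\<dots> \<le> (\<Sum>i\<in>I. measure_pmf.prob ?M (Bs i))"
      by (rule measure_pmf.finite_measure_subadditive_finite) (auto simp: I_def)
    also have "\<dots> \<le> (\<Sum>i\<in>I. exp (- (98 * L\<^sup>2)))"
      by (rule sum_mono) (rule PB)
    also have "\<dots> = real (CARD('s) * CARD('a) * H * (K * H)) * exp (- (98 * L\<^sup>2))"
      by (simp add: I_def card_cartesian_product)
    also have "\<dots> \<le> \<delta>"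
      by (rule final_arith[OF _ _ assms(2) K1 assms(1) d1 X_def L_def L1]) (simp_all add: Suc_le_eq)
    finally have PnG: "measure_pmf.prob ?M (UNIV - G) \<le> \<delta>" .
    have "measure_pmf.prob ?M (UNIV - G) = 1 - measure_pmf.prob ?M G"
      using measure_pmf.prob_compl[of G ?M] by simp
    then have "measure_pmf.prob ?M G \<ge> 1 - \<delta>" using PnG by linarith
    moreover have "G \<subseteq> ?T"
      using det_opt[OF R] unfolding G_def by blast
    then have "measure_pmf.prob ?M G \<le> measure_pmf.prob ?M ?T"
      by (rule measure_pmf.finite_measure_mono) simp
    ultimately show ?thesis by linarith
  qed
qed

end
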